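(* Let $b>0$ and $\beta>0$. Let $\alpha(\theta)=\frac{1-\cos\theta}{\theta-\sin\theta}$ for $\theta\in(0,2\pi)$, let $\tilde\theta\in(0,2\pi)$ be the unique number with $\alpha(\tilde\theta)=\beta/b$, and let $k=\frac{2\beta}{1-\cos\tilde\theta}$. Let $\gamma_0:[0,b]\to\mathbb{R}$ be the function whose graph is the curve $\theta\mapsto\left(\frac{k}{2}(\theta-\sin\theta),\ \frac{k}{2}(1-\cos\theta)\right)$, $\theta\in[0,\tilde\theta]$, and let $\delta_0=(2\gamma_0)^{1/2}$. Let $Y$ be the set of all $\delta\in C([0,b])$ which are continuously differentiable on $(0,b]$, with $\delta(t)>0$ for $t\in(0,b]$, $\delta(0)=0$, $\delta(b)=(2\beta)^{1/2}$, and such that the improper integral $$\mathcal{M}(\delta)=\int_0^b\left(\delta(t)^{-2}+\delta'(t)^2\right)^{1/2}dt$$ is defined (finite). Then $\delta_0$ is the unique minimum of $\mathcal{M}$ on $Y$.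
   Context: The function $\alpha$ is a strictly decreasing bijection from $(0,2\pi)$ onto $(0,\infty)$, so $\tilde\theta$ is well defined; with this choice of $k$, the curve starts at $(0,0)$ and ends at $(b,\beta)$, and $\theta\mapsto\frac{k}{2}(\theta-\sin\theta)$ is strictly increasing, so the curve is the graph of a function on $[0,b]$. *)

theory Defs
  imports "HOL-Analysis.Analysis"
begin

definition alpha :: "real \<Rightarrow> real" where
  "alpha \<theta> = (1 - cos \<theta>) / (\<theta> - sin \<theta>)"

definition theta_t :: "real \<Rightarrow> real \<Rightarrow> real" where
  "theta_t b \<beta> = (THE \<theta>. \<theta> \<in> {0<..<2*pi} \<and> alpha \<theta> = \<beta> / b)"

definition kk :: "real \<Rightarrow> real \<Rightarrow> real" where
  "kk b \<beta> = 2 * \<beta> / (1 - cos (theta_t b \<beta>))"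

definition gamma0 :: "real \<Rightarrow> real \<Rightarrow> real \<Rightarrow> real" where
  "gamma0 b \<beta> t =
     (let k = kk b \<beta>;
          \<theta> = (THE \<theta>. \<theta> \<in> {0..theta_t b \<beta>} \<and> k / 2 * (\<theta> - sin \<theta>) = t)
      in k / 2 * (1 - cos \<theta>))"

definition delta0 :: "real \<Rightarrow> real \<Rightarrow> real \<Rightarrow> real" where
  "delta0 b \<beta> t = sqrt (2 * gamma0 b \<beta> t)"

definition C1_deriv_on :: "(real \<Rightarrow> real) \<Rightarrow> real \<Rightarrow> (real \<Rightarrow> real) \<Rightarrow> bool" where
  "C1_deriv_on \<delta> b D \<longleftrightarrow>
     (\<forall>t\<in>{0<..b}. (\<delta> has_real_derivative D t) (at t within {0<..b})) \<and>
     continuous_on {0<..b} D"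

definition dY :: "(real \<Rightarrow> real) \<Rightarrow> real \<Rightarrow> real \<Rightarrow> real" where
  "dY \<delta> b = (SOME D. C1_deriv_on \<delta> b D)"

definition M_int :: "real \<Rightarrow> (real \<Rightarrow> real) \<Rightarrow> real \<Rightarrow> real" where
  "M_int b \<delta> e = integral {e..b} (\<lambda>t. sqrt (inverse (\<delta> t ^ 2) + (dY \<delta> b t) ^ 2))"

definition M_defined :: "real \<Rightarrow> (real \<Rightarrow> real) \<Rightarrow> bool" where
  "M_defined b \<delta> \<longleftrightarrow> (\<exists>L. (M_int b \<delta> \<longlongrightarrow> L) (at_right 0))"

definition M :: "real \<Rightarrow> (real \<Rightarrow> real) \<Rightarrow> real" where
  "M b \<delta> = Lim (at_right 0) (M_int b \<delta>)"

definition Y :: "real \<Rightarrow> real \<Rightarrow> (real \<Rightarrow> real) set" where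
  "Y b \<beta> = {\<delta>. continuous_on {0..b} \<delta> \<and> (\<exists>D. C1_deriv_on \<delta> b D) \<and>
               (\<forall>t\<in>{0<..b}. \<delta> t > 0) \<and> \<delta> 0 = 0 \<and> \<delta> b = sqrt (2 * \<beta>) \<and>
               M_defined b \<delta>}"

end

theory Submission
  imports Defs "HOL-Real_Asymp.Real_Asymp"
begin
lemma half_sin: "sin (\<theta>::real) = 2 * sin (\<theta>/2) * cos (\<theta>/2)"
  using sin_double[of "\<theta>/2"] by simp

lemma half_cos: "1 - cos (\<theta>::real) = 2 * sin (\<theta>/2)^2"
  using cos_double_sin[of "\<theta>/2"] by simp

lemma sin_half_pos: "0 < (\<theta>::real) \<Longrightarrow> \<theta> < 2*pi \<Longrightarrow> sin (\<theta>/2) > 0"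
  by (rule sin_gt_zero) auto

lemma one_minus_cos_pos: "0 < (\<theta>::real) \<Longrightarrow> \<theta> < 2*pi \<Longrightarrow> 1 - cos \<theta> > 0"
  using half_cos[of \<theta>] sin_half_pos[of \<theta>] by simp

lemma sin_less_self: assumes "0 < (\<theta>::real)" shows "sin \<theta> < \<theta>"
proof (cases "\<theta> \<ge> 2")
  case True then show ?thesis using sin_le_one[of \<theta>] by linarith
next
  case False
  have "(\<lambda>x. x - sin x) 0 < (\<lambda>x. x - sin x) \<theta>"
  proof (rule DERIV_pos_imp_increasing_open[OF assms])
    fix x :: real assume x: "0 < x" "x < \<theta>"
    have "x < 2*pi" using x False pi_gt3 by linarith
    then show "\<exists>y. ((\<lambda>x. x - sin x) has_real_derivative y) (at x) \<and> y > 0"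
      using x one_minus_cos_pos[of x]
      by (intro exI[of _ "1 - cos x"]) (auto intro!: derivative_eq_intros)
  next
    show "continuous_on {0..\<theta>} (\<lambda>x. x - sin x)" by (intro continuous_intros)
  qed
  then show ?thesis by simp
qed

lemma h_neg: assumes "0 < (\<theta>::real)" "\<theta> < 2*pi"
  shows "\<theta> * cos (\<theta>/2) - 2 * sin (\<theta>/2) < 0"
proof -
  have "(\<lambda>x. x * cos (x/2) - 2 * sin (x/2)) \<theta> < (\<lambda>x. x * cos (x/2) - 2 * sin (x/2)) 0"
  proof (rule DERIV_neg_imp_decreasing_open[OF assms(1)])
    fix x :: real assume x: "0 < x" "x < \<theta>"
    have "sin (x/2) > 0" using x assms by (intro sin_half_pos) auto
    then show "\<exists>y. ((\<lambda>x. x * cos (x/2) - 2 * sin (x/2)) has_real_derivative y) (at x) \<and> y < 0"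
      using x
      by (intro exI[of _ "- (x/2) * sin (x/2)"]) (auto intro!: derivative_eq_intros simp: algebra_simps)
  next
    show "continuous_on {0..\<theta>} (\<lambda>x. x * cos (x/2) - 2 * sin (x/2))" by (intro continuous_intros) auto
  qed
  then show ?thesis by simp
qed

lemma poly_aux: "(2*a*q)*(t - 2*a*q) - (2*a^2)^2 = 2*a*(t*q - 2*a) - 4*a^2*(a^2+q^2-1)" for a q t :: real
  by algebra

definition alphad :: "real \<Rightarrow> real" where
  "alphad \<theta> = (sin \<theta> * (\<theta> - sin \<theta>) - (1 - cos \<theta>)^2) / (\<theta> - sin \<theta>)^2"

lemma alpha_deriv: assumes "0 < \<theta>" shows "(alpha has_real_derivative alphad \<theta>) (at \<theta>)"
proof -
  have ne: "\<theta> - sin \<theta> \<noteq> 0" using sin_less_self[OF assms] by simp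
  show ?thesis unfolding alpha_def[abs_def] alphad_def
    using ne by (auto intro!: derivative_eq_intros simp: power2_eq_square field_simps)
qed

lemma alpha_isCont: "0 < \<theta> \<Longrightarrow> isCont alpha \<theta>"
  using alpha_deriv DERIV_isCont by blast

lemma alphad_neg: assumes "0 < \<theta>" "\<theta> < 2*pi" shows "alphad \<theta> < 0"
proof -
  let ?s = "sin (\<theta>/2)" and ?c = "cos (\<theta>/2)"
  have num: "sin \<theta> * (\<theta> - sin \<theta>) - (1 - cos \<theta>)^2 = 2 * ?s * (\<theta> * ?c - 2 * ?s)"
  proof -
    have sc: "?s^2 + ?c^2 = 1" by simp
    have "sin \<theta> * (\<theta> - sin \<theta>) - (1 - cos \<theta>)^2
        = (2 * ?s * ?c) * (\<theta> - 2 * ?s * ?c) - (2 * ?s^2)^2"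
      by (simp add: half_sin[of \<theta>, symmetric] half_cos[of \<theta>, symmetric])
    also have "\<dots> = 2 * ?s * (\<theta> * ?c - 2 * ?s) - 4 * ?s^2 * (?s^2 + ?c^2 - 1)"
      by (rule poly_aux)
    finally show ?thesis using sc by simp
  qed
  have "2 * ?s * (\<theta> * ?c - 2 * ?s) < 0"
    using sin_half_pos[OF assms] h_neg[OF assms] by (simp add: mult_pos_neg)
  moreover have "(\<theta> - sin \<theta>)^2 > 0" using sin_less_self[OF assms(1)] by simp
  ultimately show ?thesis unfolding alphad_def num by (simp add: divide_neg_pos)
qed

lemma alpha_pos: "0 < \<theta> \<Longrightarrow> \<theta> < 2*pi \<Longrightarrow> alpha \<theta> > 0"
  unfolding alpha_def using one_minus_cos_pos sin_less_self by simp

lemma alpha_decr: assumes "0 < a" "a < b" "b < 2*pi" shows "alpha b < alpha a"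
proof -
  have "alpha b < alpha a"
  proof (rule DERIV_neg_imp_decreasing_open[OF assms(2)])
    fix x assume "a < x" "x < b"
    then show "\<exists>y. (alpha has_real_derivative y) (at x) \<and> y < 0"
      using assms alpha_deriv alphad_neg by (intro exI[of _ "alphad x"]) auto
  next
    show "continuous_on {a..b} alpha"
      using assms by (intro continuous_at_imp_continuous_on ballI alpha_isCont) auto
  qed
  then show ?thesis .
qed

lemma alpha_inj: "0 < a \<Longrightarrow> a < 2*pi \<Longrightarrow> 0 < b \<Longrightarrow> b < 2*pi \<Longrightarrow> alpha a = alpha b \<Longrightarrow> a = b"
  using alpha_decr[of a b] alpha_decr[of b a] by (cases a b rule: linorder_cases) auto

lemma alpha_ex: assumes "r > 0" shows "\<exists>\<theta>. 0 < \<theta> \<and> \<theta> < 2*pi \<and> alpha \<theta> = r"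
proof -
  have lim: "filterlim alpha at_top (at_right 0)"
    unfolding alpha_def by real_asymp
  have "eventually (\<lambda>x. alpha x > r) (at_right (0::real))"
    using lim by (simp add: filterlim_at_top_dense)
  moreover have "eventually (\<lambda>x. x < 2*pi \<and> x > 0) (at_right (0::real))"
    using eventually_at_right_real[of 0 "2*pi"] by (simp add: conj_commute)
  ultimately have "eventually (\<lambda>x. alpha x > r \<and> x < 2*pi \<and> x > 0) (at_right (0::real))"
    by eventually_elim auto
  then obtain t where t: "alpha t > r" "t < 2*pi" "t > 0"
    using eventually_happens[of _ "at_right (0::real)"] by (auto simp: trivial_limit_at_right_real)
  have a2: "alpha (2*pi) = 0" by (simp add: alpha_def)
  have "\<exists>x\<ge>t. x \<le> 2*pi \<and> alpha x = r"
    by (rule IVT2') (use t a2 assms in \<open>auto intro!: continuous_at_imp_continuous_on alpha_isCont\<close>)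
  then obtain x where "x \<ge> t" "x \<le> 2*pi" "alpha x = r" by auto
  moreover have "x \<noteq> 2*pi" using a2 assms \<open>alpha x = r\<close> by auto
  ultimately show ?thesis using t by (intro exI[of _ x]) auto
qed

definition Ainv :: "real \<Rightarrow> real" where
  "Ainv r = (THE \<theta>. \<theta> \<in> {0<..<2*pi} \<and> alpha \<theta> = r)"

lemma Ainv: assumes "r > 0" shows "0 < Ainv r" "Ainv r < 2*pi" "alpha (Ainv r) = r"
proof -
  obtain \<theta> where th: "0 < \<theta>" "\<theta> < 2*pi" "alpha \<theta> = r" using alpha_ex[OF assms] by blast
  have "Ainv r = \<theta>" unfolding Ainv_def
    by (rule the_equality) (use th alpha_inj in auto)
  then show "0 < Ainv r" "Ainv r < 2*pi" "alpha (Ainv r) = r" using th by auto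
qed

lemma Ainv_alpha: "0 < \<theta> \<Longrightarrow> \<theta> < 2*pi \<Longrightarrow> Ainv (alpha \<theta>) = \<theta>"
  using Ainv[of "alpha \<theta>"] alpha_pos[of \<theta>] alpha_inj[of "Ainv (alpha \<theta>)" \<theta>] by auto

lemma theta_t_Ainv: "theta_t b \<beta> = Ainv (\<beta> / b)"
  unfolding theta_t_def Ainv_def ..

lemma Ainv_isCont: assumes "r > 0" shows "isCont Ainv r"
proof -
  define x where "x = Ainv r"
  have x: "0 < x" "x < 2*pi" "alpha x = r" using Ainv[OF assms] x_def by auto
  define d where "d = min x (2*pi - x) / 2"
  have d: "d > 0" using x by (simp add: d_def)
  have zb: "0 < z \<and> z < 2*pi" if z: "\<bar>z - x\<bar> \<le> d" for z
  proof -
    have "z - x \<le> d" "x - z \<le> d" using z by auto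
    moreover have "d \<le> x/2" "d \<le> (2*pi - x)/2" by (auto simp: d_def)
    ultimately show ?thesis using x(1,2) by argo
  qed
  have "isCont Ainv (alpha x)"
    by (rule isCont_inverse_function[OF d]) (use zb Ainv_alpha alpha_isCont in auto)
  then show ?thesis using x by simp
qed

lemma Ainv_deriv: assumes "r > 0" shows "(Ainv has_real_derivative inverse (alphad (Ainv r))) (at r)"
proof (rule DERIV_inverse_function[where f=alpha and g=Ainv and a=0 and b="r+1"])
  show "(alpha has_real_derivative alphad (Ainv r)) (at (Ainv r))" using Ainv[OF assms] alpha_deriv by auto
  show "alphad (Ainv r) \<noteq> 0" using Ainv[OF assms] alphad_neg[of "Ainv r"] by auto
  show "0 < r" "r < r + 1" using assms by auto
  show "\<And>y. 0 < y \<Longrightarrow> y < r + 1 \<Longrightarrow> alpha (Ainv y) = y" using Ainv by auto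
  show "isCont Ainv r" using Ainv_isCont[OF assms] .
qed

lemma core:
  fixes t d p \<theta> :: real
  assumes t: "t > 0" and d: "d > 0" and th: "0 < \<theta>" "\<theta> < 2*pi"
    and al: "alpha \<theta> = (d^2/2) / t"
  defines "y \<equiv> d^2/2" and "y' \<equiv> d * p"
  defines "r' \<equiv> (y' * t - y) / t^2"
  defines "th' \<equiv> r' / alphad \<theta>"
  defines "c \<equiv> y / (1 - cos \<theta>)"
  defines "c' \<equiv> (y' * (1 - cos \<theta>) - y * sin \<theta> * th') / (1 - cos \<theta>)^2"
  defines "S' \<equiv> c' * \<theta> / (2 * sqrt c) + sqrt c * th'"
  defines "G \<equiv> sqrt (inverse (d^2) + p^2)"
  shows "S' \<le> G" "G = S' \<longleftrightarrow> c' = 0"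
proof -
  define u where "u = 1 - cos \<theta>"
  define v where "v = \<theta> - sin \<theta>"
  have u: "u > 0" using one_minus_cos_pos th by (simp add: u_def)
  have v: "v > 0" using sin_less_self th by (simp add: v_def)
  have y: "y > 0" using d by (simp add: y_def)
  have yv: "y * v = t * u" using al t v unfolding alpha_def u_def[symmetric] v_def[symmetric]
    by (simp add: field_simps y_def)
  have ad: "alphad \<theta> * v^2 = sin \<theta> * v - u^2"
    using v unfolding alphad_def u_def[symmetric] v_def[symmetric] by simp
  have adne: "alphad \<theta> \<noteq> 0" using alphad_neg th by force
  have thr: "th' * alphad \<theta> = r'" using adne by (simp add: th'_def)
  have r't: "r' * t^2 = y' * t - y" using t by (simp add: r'_def)
  have cu: "c * u = y" using u by (simp add: c_def u_def[symmetric])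
  have c'u: "c' * u^2 = y' * u - y * sin \<theta> * th'" using u by (simp add: c'_def u_def[symmetric])
  have "(c' * v + c * th' * u) * u^2 * y = (c' * u^2) * v * y + (c * u) * th' * u^2 * y"
    by (simp add: algebra_simps power2_eq_square)
  also have "\<dots> = (y' * u - y * sin \<theta> * th') * v * y + y * th' * u^2 * y" by (simp only: c'u cu)
  also have "\<dots> = y' * u * (y * v) - th' * (sin \<theta> * v - u^2) * y^2"
    by (simp add: algebra_simps power2_eq_square)
  also have "\<dots> = y' * u * (y * v) - th' * (alphad \<theta> * v^2) * y^2"
    by (simp only: ad)
  also have "\<dots> = y' * u * (y * v) - (th' * alphad \<theta>) * (y * v)^2"
    by (simp add: algebra_simps power2_eq_square)
  also have "\<dots> = y' * u * (t * u) - r' * (t * u)^2"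
    by (simp only: thr yv)
  also have "\<dots> = u^2 * (y' * t - r' * t^2)"
    by (simp add: algebra_simps power2_eq_square)
  also have "\<dots> = u^2 * y" by (simp add: r't)
  finally have "(c' * v + c * th' * u) * (u^2 * y) = 1 * (u^2 * y)" by (simp add: algebra_simps)
  then have R2: "c' * v + c * th' * u = 1" using u y by simp
  have R3: "c' * u + c * th' * sin \<theta> = y'"
  proof -
    have "(c' * u + c * th' * sin \<theta>) * u = c' * u^2 + (c * u) * th' * sin \<theta>"
      by (simp add: algebra_simps power2_eq_square)
    also have "\<dots> = y' * u" by (simp add: c'u cu)
    finally show ?thesis using u by simp
  qed
  define s where "s = sin (\<theta>/2)"
  define q where "q = cos (\<theta>/2)"
  have s: "s > 0" using sin_half_pos th by (simp add: s_def)
  have sq: "s^2 + q^2 = 1" by (simp add: s_def q_def)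
  have us: "u = 2 * s^2" using half_cos by (simp add: u_def s_def)
  have sins: "sin \<theta> = 2 * s * q" unfolding s_def q_def by (rule half_sin)
  have vs: "v = \<theta> - 2 * s * q" using sins by (simp add: v_def)
  define P where "P = s * (c' * \<theta> + 2 * c * th')"
  define Q where "Q = c' * (\<theta> * q - 2 * s)"
  have P: "P = s + y' * q"
  proof -
    have "s + y' * q = s * (c' * v + c * th' * u) + q * (c' * u + c * th' * sin \<theta>)"
      by (simp add: R2 R3)
    also have "\<dots> = c' * \<theta> * s + 2 * c * th' * s * (s^2 + q^2)"
      by (simp add: vs us sins algebra_simps power2_eq_square)
    finally have "s + y' * q = c' * \<theta> * s + 2 * c * th' * s * (s^2 + q^2)" .
    then show ?thesis unfolding sq P_def by (simp add: algebra_simps)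
  qed
  have Q: "Q = q - y' * s"
  proof -
    have "q - y' * s = q * (c' * v + c * th' * u) - s * (c' * u + c * th' * sin \<theta>)"
      by (simp add: R2 R3)
    also have "\<dots> = c' * (\<theta> * q - 2 * s * (s^2 + q^2))"
      by (simp add: vs us sins algebra_simps power2_eq_square)
    finally have "q - y' * s = c' * (\<theta> * q - 2 * s * (s^2 + q^2))" .
    then show ?thesis unfolding sq Q_def by (simp add: algebra_simps)
  qed
  have PQ: "P^2 + Q^2 = 1 + y'^2"
  proof -
    have "P^2 + Q^2 = (s^2 + q^2) * (1 + y'^2)" unfolding P Q by (simp add: algebra_simps power2_eq_square)
    then show ?thesis using sq by simp
  qed
  have c4: "c = d^2 / (4 * s^2)" using cu us s by (simp add: y_def field_simps)
  have sqc: "sqrt c = d / (2 * s)"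
    using c4 s d by (simp add: real_sqrt_divide real_sqrt_mult)
  have S'P: "S' = P / d"
  proof -
    have e1: "S' = c' * \<theta> * s / d + d * th' / (2 * s)"
      using s d unfolding S'_def sqc by (simp add: field_simps)
    have e2: "2 * c * th' * s / d = d * th' / (2 * s)"
      using s d unfolding c4 by (simp add: field_simps power2_eq_square)
    have e3: "P / d = c' * \<theta> * s / d + 2 * c * th' * s / d"
      unfolding P_def by (simp add: add_divide_distrib algebra_simps)
    show ?thesis using e1 e2 e3 by simp
  qed
  have GP: "G = sqrt (P^2 + Q^2) / d"
  proof -
    have "(1 + y'^2) / d^2 = inverse (d^2) + p^2" using d
      by (simp add: y'_def power_mult_distrib add_divide_distrib inverse_eq_divide)
    moreover have "sqrt ((1 + y'^2) / d^2) = sqrt (1 + y'^2) / d" using d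
      by (simp add: real_sqrt_divide)
    ultimately show ?thesis unfolding G_def PQ by simp
  qed
  have le: "P \<le> sqrt (P^2 + Q^2)"
  proof -
    have "sqrt (P^2) \<le> sqrt (P^2 + Q^2)" by (rule real_sqrt_le_mono) simp
    then have "\<bar>P\<bar> \<le> sqrt (P^2 + Q^2)" by (simp only: real_sqrt_abs)
    then show ?thesis by linarith
  qed
  show "S' \<le> G" unfolding S'P GP using le d by (simp add: divide_right_mono)
  have hq: "\<theta> * q - 2 * s \<noteq> 0" using h_neg[OF th] unfolding s_def q_def by simp
  show "G = S' \<longleftrightarrow> c' = 0"
  proof
    assume "G = S'"
    then have "sqrt (P^2 + Q^2) = P" unfolding S'P GP using d by simp
    then have "(sqrt (P^2 + Q^2))^2 = P^2" by simp
    then have "P^2 + Q^2 = P^2" using real_sqrt_pow2[of "P^2 + Q^2"] by simp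
    then have "Q = 0" by simp
    then show "c' = 0" using hq by (simp add: Q_def)
  next
    assume c'0: "c' = 0"
    have cth: "c * th' * u = 1" using R2 c'0 by simp
    have "c * th' = 1 / u" using cth u by (simp add: field_simps)
    then have "c * th' > 0" using u by simp
    then have "P \<ge> 0" using s c'0 by (simp add: P_def)
    moreover have "Q = 0" using c'0 by (simp add: Q_def)
    ultimately show "G = S'" unfolding S'P GP by simp
  qed
qed

lemma one_minus_cos_le: assumes "(x::real) \<ge> 0" shows "1 - cos x \<le> x^2/2"
proof -
  have "(\<lambda>x. x^2/2 - 1 + cos x) 0 \<le> (\<lambda>x. x^2/2 - 1 + cos x) x"
  proof (rule DERIV_nonneg_imp_increasing_open[OF assms])
    fix z :: real assume "0 < z" "z < x"
    then show "\<exists>y. ((\<lambda>x. x^2/2 - 1 + cos x) has_real_derivative y) (at z) \<and> y \<ge> 0"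
      using sin_x_le_x[of z] by (intro exI[of _ "z - sin z"]) (auto intro!: derivative_eq_intros)
  qed (intro continuous_intros, auto)
  then show ?thesis by simp
qed

lemma x_minus_sin_le: assumes "(x::real) \<ge> 0" shows "x - sin x \<le> x^3/6"
proof -
  have "(\<lambda>x. x^3/6 - x + sin x) 0 \<le> (\<lambda>x. x^3/6 - x + sin x) x"
  proof (rule DERIV_nonneg_imp_increasing_open[OF assms])
    fix z :: real assume "0 < z" "z < x"
    then show "\<exists>y. ((\<lambda>x. x^3/6 - x + sin x) has_real_derivative y) (at z) \<and> y \<ge> 0"
      using one_minus_cos_le[of z]
      by (intro exI[of _ "z^2/2 - 1 + cos z"]) (auto intro!: derivative_eq_intros simp: power2_eq_square power3_eq_cube)
  qed (intro continuous_intros, auto)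
  then show ?thesis by simp
qed

lemma one_minus_cos_ge: assumes "(x::real) \<ge> 0" shows "x^2/2 - x^4/24 \<le> 1 - cos x"
proof -
  have "(\<lambda>x. 1 - cos x - x^2/2 + x^4/24) 0 \<le> (\<lambda>x. 1 - cos x - x^2/2 + x^4/24) x"
  proof (rule DERIV_nonneg_imp_increasing_open[OF assms])
    fix z :: real assume "0 < z" "z < x"
    then show "\<exists>y. ((\<lambda>x. 1 - cos x - x^2/2 + x^4/24) has_real_derivative y) (at z) \<and> y \<ge> 0"
      using x_minus_sin_le[of z]
      by (intro exI[of _ "sin z - z + z^3/6"])
         (auto intro!: derivative_eq_intros simp: power2_eq_square power3_eq_cube eval_nat_numeral)
  qed (intro continuous_intros, auto)
  then show ?thesis by simp
qed

lemma theta_sq_bound: assumes "0 < (\<theta>::real)" "\<theta> < 2*pi"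
  shows "\<theta>^2 \<le> 64 * ((\<theta> - sin \<theta>) + (1 - cos \<theta>))"
proof (cases "\<theta> \<le> 2")
  case True
  have "\<theta>^4 \<le> 4 * \<theta>^2"
  proof -
    have "\<theta>^2 \<le> 2^2" using True assms by (intro power_mono) auto
    then have "\<theta>^2 \<le> 4" by simp
    then have "\<theta>^2 * \<theta>^2 \<le> 4 * \<theta>^2" by (rule mult_right_mono) simp
    moreover have "\<theta>^4 = \<theta>^2 * \<theta>^2" by (simp add: eval_nat_numeral)
    ultimately show ?thesis by linarith
  qed
  then have "\<theta>^2/3 \<le> 1 - cos \<theta>" using one_minus_cos_ge[of \<theta>] assms by linarith
  moreover have "\<theta> - sin \<theta> \<ge> 0" using sin_less_self[OF assms(1)] by simp
  ultimately show ?thesis using zero_le_power2[of \<theta>] by argo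
next
  case False
  have "\<theta> - sin \<theta> \<ge> 1" using sin_le_one[of \<theta>] False by linarith
  moreover have "1 - cos \<theta> \<ge> 0" by simp
  moreover have "\<theta>^2 \<le> 64"
  proof -
    have "\<theta> < 8" using assms pi_less_4 by linarith
    then have "\<theta>^2 \<le> 8^2" using assms by (intro power_mono) auto
    then show ?thesis by simp
  qed
  ultimately show ?thesis by argo
qed

definition fth :: "(real \<Rightarrow> real) \<Rightarrow> real \<Rightarrow> real" where
  "fth \<delta> t = Ainv (\<delta> t ^ 2 / 2 / t)"
definition fc :: "(real \<Rightarrow> real) \<Rightarrow> real \<Rightarrow> real" where
  "fc \<delta> t = \<delta> t ^ 2 / 2 / (1 - cos (fth \<delta> t))"
definition fS :: "(real \<Rightarrow> real) \<Rightarrow> real \<Rightarrow> real" where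
  "fS \<delta> t = sqrt (fc \<delta> t) * fth \<delta> t"
definition fth' :: "(real \<Rightarrow> real) \<Rightarrow> (real \<Rightarrow> real) \<Rightarrow> real \<Rightarrow> real" where
  "fth' \<delta> D t = ((\<delta> t * D t * t - \<delta> t ^ 2 / 2) / t^2) / alphad (fth \<delta> t)"
definition fc' :: "(real \<Rightarrow> real) \<Rightarrow> (real \<Rightarrow> real) \<Rightarrow> real \<Rightarrow> real" where
  "fc' \<delta> D t = (\<delta> t * D t * (1 - cos (fth \<delta> t)) - \<delta> t ^ 2 / 2 * sin (fth \<delta> t) * fth' \<delta> D t)
      / (1 - cos (fth \<delta> t))^2"
definition fS' :: "(real \<Rightarrow> real) \<Rightarrow> (real \<Rightarrow> real) \<Rightarrow> real \<Rightarrow> real" where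
  "fS' \<delta> D t = fc' \<delta> D t * fth \<delta> t / (2 * sqrt (fc \<delta> t)) + sqrt (fc \<delta> t) * fth' \<delta> D t"
definition fG :: "(real \<Rightarrow> real) \<Rightarrow> (real \<Rightarrow> real) \<Rightarrow> real \<Rightarrow> real" where
  "fG \<delta> D t = sqrt (inverse (\<delta> t ^ 2) + D t ^ 2)"

lemma fth_props: assumes "t > 0" "\<delta> t \<noteq> 0"
  shows "0 < fth \<delta> t" "fth \<delta> t < 2*pi" "alpha (fth \<delta> t) = \<delta> t ^ 2 / 2 / t"
  using Ainv[of "\<delta> t ^ 2 / 2 / t"] assms by (auto simp: fth_def)

lemma fc_pos: assumes "t > 0" "\<delta> t \<noteq> 0" shows "fc \<delta> t > 0"
  using fth_props[where t=t and \<delta>=\<delta>, OF assms] one_minus_cos_pos assms by (simp add: fc_def)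

lemma fS_core: assumes "t > 0" "\<delta> t > 0"
  shows "fS' \<delta> D t \<le> fG \<delta> D t" "fG \<delta> D t = fS' \<delta> D t \<longleftrightarrow> fc' \<delta> D t = 0"
proof -
  have ne: "\<delta> t \<noteq> 0" using assms by simp
  note th = fth_props[where t=t and \<delta>=\<delta>, OF assms(1) ne]
  note c = core[OF assms(1,2) th(1,2) th(3), of "D t"]
  show "fS' \<delta> D t \<le> fG \<delta> D t"
    unfolding fS'_def fG_def fc'_def fth'_def fc_def by (rule c(1))
  show "fG \<delta> D t = fS' \<delta> D t \<longleftrightarrow> fc' \<delta> D t = 0"
    unfolding fS'_def fG_def fc'_def fth'_def fc_def by (rule c(2))
qed

lemma aux_inv: "inverse a / 2 * b * c + d * a = b * c / (2 * a) + a * d" for a b c d :: real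
  by (cases "a = 0") (simp_all add: field_simps)

lemma aux_div: "(p * g - f * (s * r)) / (g * g) = (p * g - f * s * r) / g^2" for p g f s r :: real
  by (simp add: power2_eq_square mult.assoc)

lemma aux_inv2: "inverse a * b = b / a" for a b :: real
  by (simp add: divide_inverse mult.commute)

lemma fS_deriv:
  assumes t: "t > 0" and d: "\<delta> t > 0" and der: "(\<delta> has_real_derivative D t) (at t)"
  shows "(fth \<delta> has_real_derivative fth' \<delta> D t) (at t)"
    and "(fc \<delta> has_real_derivative fc' \<delta> D t) (at t)"
    and "(fS \<delta> has_real_derivative fS' \<delta> D t) (at t)"
proof -
  have ne: "\<delta> t \<noteq> 0" using d by simp
  note th = fth_props[where t=t and \<delta>=\<delta>, OF t ne]
  have dy: "((\<lambda>t. \<delta> t ^ 2 / 2) has_real_derivative \<delta> t * D t) (at t)"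
    by (rule DERIV_cong[OF DERIV_cdivide[OF DERIV_power[OF der]]]) simp
  have r: "((\<lambda>t. \<delta> t ^ 2 / 2 / t) has_real_derivative (\<delta> t * D t * t - \<delta> t ^ 2 / 2) / t^2) (at t)"
  proof -
    have "((\<lambda>t. \<delta> t ^ 2 / 2 / t) has_real_derivative (\<delta> t * D t * t - \<delta> t ^ 2 / 2 * 1) / (t * t)) (at t)"
      using t by (intro DERIV_divide dy DERIV_ident) auto
    then show ?thesis by (simp only: power2_eq_square[of t] mult_1_right)
  qed
  have rpos: "\<delta> t ^ 2 / 2 / t > 0" using t d by simp
  show thd: "(fth \<delta> has_real_derivative fth' \<delta> D t) (at t)"
  proof -
    have "((\<lambda>t. Ainv (\<delta> t ^ 2 / 2 / t)) has_real_derivative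
           inverse (alphad (Ainv (\<delta> t ^ 2 / 2 / t))) * ((\<delta> t * D t * t - \<delta> t ^ 2 / 2) / t^2)) (at t)"
      by (rule DERIV_chain2[OF Ainv_deriv[OF rpos] r])
    then show ?thesis unfolding fth'_def fth_def[abs_def] by (simp only: aux_inv2)
  qed
  have u: "1 - cos (fth \<delta> t) \<noteq> 0" using one_minus_cos_pos[OF th(1,2)] by simp
  have dcos: "((\<lambda>t. 1 - cos (fth \<delta> t)) has_real_derivative sin (fth \<delta> t) * fth' \<delta> D t) (at t)"
  proof -
    have "((\<lambda>t. 1 - cos (fth \<delta> t)) has_real_derivative 0 - (- sin (fth \<delta> t) * fth' \<delta> D t)) (at t)"
      by (rule DERIV_diff[OF DERIV_const DERIV_chain2[OF DERIV_cos thd]])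
    then show ?thesis by simp
  qed
  show cd: "(fc \<delta> has_real_derivative fc' \<delta> D t) (at t)"
    unfolding fc_def[abs_def]
    by (rule DERIV_cong[OF DERIV_divide[OF dy dcos u]]) (unfold fc'_def, rule aux_div)
  have cpos: "fc \<delta> t > 0" using fc_pos[where t=t and \<delta>=\<delta>, OF t ne] .
  have sd: "((\<lambda>t. sqrt (fc \<delta> t)) has_real_derivative inverse (sqrt (fc \<delta> t)) / 2 * fc' \<delta> D t) (at t)"
    by (rule DERIV_chain2[OF DERIV_real_sqrt[OF cpos] cd])
  show "(fS \<delta> has_real_derivative fS' \<delta> D t) (at t)"
    unfolding fS_def[abs_def]
    by (rule DERIV_cong[OF DERIV_mult[OF sd thd]]) (unfold fS'_def, rule aux_inv)
qed

lemma Ainv_cont: "continuous_on {0<..} Ainv"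
  by (intro continuous_at_imp_continuous_on ballI Ainv_isCont) auto

lemma alphad_cont: "continuous_on {0<..} alphad"
proof -
  have "continuous_on {0<..} (\<lambda>\<theta>::real. (sin \<theta> * (\<theta> - sin \<theta>) - (1 - cos \<theta>)^2) / (\<theta> - sin \<theta>)^2)"
  proof (intro continuous_intros ballI)
    fix x :: real assume "x \<in> {0<..}"
    then have "sin x < x" using sin_less_self by simp
    then show "(x - sin x)^2 \<noteq> 0" by simp
  qed
  then show ?thesis unfolding alphad_def[abs_def] .
qed

lemma f_cont:
  assumes A: "A \<subseteq> {0<..}" and pos: "\<And>t. t \<in> A \<Longrightarrow> \<delta> t > 0"
    and cd: "continuous_on A \<delta>" and cD: "continuous_on A D"
  shows "continuous_on A (fth \<delta>)" "continuous_on A (fc \<delta>)" "continuous_on A (fS \<delta>)"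
    "continuous_on A (fS' \<delta> D)" "continuous_on A (fG \<delta> D)"
proof -
  have tpos: "\<And>t. t \<in> A \<Longrightarrow> t > 0" using A by auto
  have tne: "\<forall>t\<in>A. t \<noteq> 0"
  proof
    fix t assume "t \<in> A"
    then show "t \<noteq> 0" using tpos[of t] by simp
  qed
  have r: "continuous_on A (\<lambda>t. \<delta> t ^ 2 / 2 / t)"
    by (intro continuous_intros cd tne) simp
  have rpos: "(\<lambda>t. \<delta> t ^ 2 / 2 / t) ` A \<subseteq> {0<..}"
  proof
    fix x assume "x \<in> (\<lambda>t. \<delta> t ^ 2 / 2 / t) ` A"
    then obtain t where t: "t \<in> A" "x = \<delta> t ^ 2 / 2 / t" by blast
    have "\<delta> t ^ 2 / 2 / t > 0" using tpos[OF t(1)] pos[OF t(1)] by simp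
    then show "x \<in> {0<..}" using t by simp
  qed
  show fthc: "continuous_on A (fth \<delta>)"
    unfolding fth_def[abs_def] by (rule continuous_on_compose2[OF Ainv_cont r rpos])
  have thb: "0 < fth \<delta> t \<and> fth \<delta> t < 2*pi" if "t \<in> A" for t
  proof -
    have "\<delta> t \<noteq> 0" using pos[OF that] by simp
    then show ?thesis using fth_props[where t=t and \<delta>=\<delta>, OF tpos[OF that]] by simp
  qed
  have adc: "continuous_on A (\<lambda>t. alphad (fth \<delta> t))"
    by (rule continuous_on_compose2[OF alphad_cont fthc]) (use thb in auto)
  have adne: "\<forall>t\<in>A. alphad (fth \<delta> t) \<noteq> 0"
  proof
    fix t assume "t \<in> A"
    then have "alphad (fth \<delta> t) < 0" using thb alphad_neg by blast
    then show "alphad (fth \<delta> t) \<noteq> 0" by simp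
  qed
  have une: "\<forall>t\<in>A. 1 - cos (fth \<delta> t) \<noteq> 0"
  proof
    fix t assume "t \<in> A"
    then have "1 - cos (fth \<delta> t) > 0" using thb one_minus_cos_pos by blast
    then show "1 - cos (fth \<delta> t) \<noteq> 0" by simp
  qed
  have une2: "\<forall>t\<in>A. (1 - cos (fth \<delta> t))^2 \<noteq> 0" using une by simp
  have cpos: "fc \<delta> t > 0" if "t \<in> A" for t
  proof -
    have "\<delta> t \<noteq> 0" using pos[OF that] by simp
    then show ?thesis using fc_pos[where t=t and \<delta>=\<delta>, OF tpos[OF that]] by simp
  qed
  have sne: "\<forall>t\<in>A. 2 * sqrt (fc \<delta> t) \<noteq> 0"
  proof
    fix t assume "t \<in> A"
    then have "sqrt (fc \<delta> t) > 0" using cpos by simp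
    then show "2 * sqrt (fc \<delta> t) \<noteq> 0" by simp
  qed
  have dne: "\<forall>t\<in>A. \<delta> t ^ 2 \<noteq> 0"
  proof
    fix t assume "t \<in> A"
    then have "\<delta> t > 0" using pos by simp
    then show "\<delta> t ^ 2 \<noteq> 0" by simp
  qed
  have t2ne: "\<forall>t\<in>A. t ^ 2 \<noteq> 0" using tne by simp
  have twone: "\<forall>t\<in>A. (2::real) \<noteq> 0" by simp
  have th'c: "continuous_on A (fth' \<delta> D)"
    unfolding fth'_def[abs_def] by (intro continuous_intros cd cD fthc adc adne t2ne twone)
  show fcc: "continuous_on A (fc \<delta>)"
    unfolding fc_def[abs_def] by (intro continuous_intros cd fthc une twone)
  have c'c: "continuous_on A (fc' \<delta> D)"
    unfolding fc'_def[abs_def] by (intro continuous_intros cd cD fthc th'c une2 twone)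
  show "continuous_on A (fS \<delta>)"
    unfolding fS_def[abs_def] by (intro continuous_intros fcc fthc)
  show "continuous_on A (fS' \<delta> D)"
    unfolding fS'_def[abs_def] by (intro continuous_intros fcc fthc c'c th'c sne)
  show "continuous_on A (fG \<delta> D)"
    unfolding fG_def[abs_def] by (intro continuous_intros cd cD dne)
qed

lemma Y_C1: assumes "\<delta> \<in> Y b \<beta>" shows "C1_deriv_on \<delta> b (dY \<delta> b)"
proof -
  have "\<exists>D. C1_deriv_on \<delta> b D" using assms by (simp add: Y_def)
  then show ?thesis unfolding dY_def by (rule someI_ex)
qed

lemma C1_at: assumes "C1_deriv_on \<delta> b D" "0 < t" "t < b"
  shows "(\<delta> has_real_derivative D t) (at t)"
proof -
  have "(\<delta> has_real_derivative D t) (at t within {0<..b})" using assms by (simp add: C1_deriv_on_def)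
  then have "(\<delta> has_real_derivative D t) (at t within {0<..<b})"
    by (rule DERIV_subset) auto
  then show ?thesis using assms at_within_open[of t "{0<..<b}"] by simp
qed

lemma main_ineq:
  assumes C1: "C1_deriv_on \<delta> b D" and cont: "continuous_on {0..b} \<delta>"
    and pos: "\<And>t. t \<in> {0<..b} \<Longrightarrow> \<delta> t > 0"
    and a: "0 < a" "a \<le> e" "e \<le> b"
  shows "(fS' \<delta> D has_integral (fS \<delta> e - fS \<delta> a)) {a..e}"
    "fG \<delta> D integrable_on {a..e}"
    "fS \<delta> e - fS \<delta> a \<le> integral {a..e} (fG \<delta> D)"
proof -
  have sub: "{a..e} \<subseteq> {0<..}" using a by auto
  have pos': "\<And>t. t \<in> {a..e} \<Longrightarrow> \<delta> t > 0" using pos a by auto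
  have cd: "continuous_on {a..e} \<delta>" by (rule continuous_on_subset[OF cont]) (use a in auto)
  have cD: "continuous_on {a..e} D"
  proof (rule continuous_on_subset)
    show "continuous_on {0<..b} D" using C1 unfolding C1_deriv_on_def by simp
    show "{a..e} \<subseteq> {0<..b}" using a by auto
  qed
  note fc = f_cont[OF sub pos' cd cD]
  show ftc: "(fS' \<delta> D has_integral (fS \<delta> e - fS \<delta> a)) {a..e}"
  proof (rule fundamental_theorem_of_calculus_interior[OF a(2) fc(3)])
    fix x assume x: "x \<in> {a<..<e}"
    then have "(\<delta> has_real_derivative D x) (at x)" using a by (intro C1_at[OF C1]) auto
    then have "(fS \<delta> has_real_derivative fS' \<delta> D x) (at x)"
      using x a pos by (intro fS_deriv(3)) auto
    then show "(fS \<delta> has_vector_derivative fS' \<delta> D x) (at x)"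
      by (simp add: has_real_derivative_iff_has_vector_derivative)
  qed
  show int: "fG \<delta> D integrable_on {a..e}" by (rule integrable_continuous_interval[OF fc(5)])
  show "fS \<delta> e - fS \<delta> a \<le> integral {a..e} (fG \<delta> D)"
  proof (rule has_integral_le[OF ftc integrable_integral[OF int]])
    fix x assume "x \<in> {a..e}"
    then show "fS' \<delta> D x \<le> fG \<delta> D x" using a pos by (intro fS_core(1)) auto
  qed
qed

lemma field_R1: assumes t: "t > 0" and d: "\<delta> t \<noteq> 0"
  shows "t = fc \<delta> t * (fth \<delta> t - sin (fth \<delta> t))"
    "\<delta> t ^ 2 / 2 = fc \<delta> t * (1 - cos (fth \<delta> t))"
proof -
  note th = fth_props[where t=t and \<delta>=\<delta>, OF t d]
  define \<theta> where "\<theta> = fth \<delta> t"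
  define y where "y = \<delta> t ^ 2 / 2"
  have u: "1 - cos \<theta> > 0" using one_minus_cos_pos th by (simp add: \<theta>_def)
  have v: "\<theta> - sin \<theta> > 0" using sin_less_self th by (simp add: \<theta>_def)
  have al: "(1 - cos \<theta>) / (\<theta> - sin \<theta>) = y / t" using th by (simp add: \<theta>_def y_def alpha_def)
  then have "(1 - cos \<theta>) * t = y * (\<theta> - sin \<theta>)" using u v t by (simp add: field_simps)
  then have "t = y / (1 - cos \<theta>) * (\<theta> - sin \<theta>)" using u by (simp add: field_simps)
  then show "t = fc \<delta> t * (fth \<delta> t - sin (fth \<delta> t))" by (simp add: fc_def \<theta>_def y_def)
  have "y = y / (1 - cos \<theta>) * (1 - cos \<theta>)" using u by simp
  then show "\<delta> t ^ 2 / 2 = fc \<delta> t * (1 - cos (fth \<delta> t))" by (simp add: fc_def \<theta>_def y_def)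
qed

lemma fS_nonneg: assumes "t > 0" "\<delta> t \<noteq> 0" shows "fS \<delta> t \<ge> 0"
  using fth_props[where t=t and \<delta>=\<delta>, OF assms] fc_pos[where t=t and \<delta>=\<delta>, OF assms]
  by (simp add: fS_def)

lemma fS_bound: assumes t: "t > 0" and d: "\<delta> t \<noteq> 0"
  shows "fS \<delta> t \<le> sqrt (64 * (t + \<delta> t ^ 2 / 2))"
proof -
  note th = fth_props[where t=t and \<delta>=\<delta>, OF t d]
  have c: "fc \<delta> t > 0" using fc_pos[where t=t and \<delta>=\<delta>, OF t d] .
  have "(fS \<delta> t)^2 = fc \<delta> t * (fth \<delta> t)^2"
    using c by (simp add: fS_def power_mult_distrib)
  also have "\<dots> \<le> fc \<delta> t * (64 * ((fth \<delta> t - sin (fth \<delta> t)) + (1 - cos (fth \<delta> t))))"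
    using theta_sq_bound[OF th(1,2)] c by (intro mult_left_mono) auto
  also have "\<dots> = 64 * (fc \<delta> t * (fth \<delta> t - sin (fth \<delta> t)) + fc \<delta> t * (1 - cos (fth \<delta> t)))"
    by (simp add: algebra_simps)
  also have "\<dots> = 64 * (t + \<delta> t ^ 2 / 2)"
    using field_R1[where t=t and \<delta>=\<delta>, OF t d] by simp
  finally have "(fS \<delta> t)^2 \<le> 64 * (t + \<delta> t ^ 2 / 2)" .
  then have "sqrt ((fS \<delta> t)^2) \<le> sqrt (64 * (t + \<delta> t ^ 2 / 2))" by (rule real_sqrt_le_mono)
  moreover have "fS \<delta> t \<ge> 0" using fS_nonneg[where t=t and \<delta>=\<delta>, OF t d] .
  ultimately show ?thesis by simp
qed

lemma fS_lim:
  assumes b: "b > 0" and cont: "continuous_on {0..b} \<delta>" and d0: "\<delta> 0 = 0"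
    and pos: "\<And>t. t \<in> {0<..b} \<Longrightarrow> \<delta> t > 0"
  shows "(fS \<delta> \<longlongrightarrow> 0) (at_right 0)"
proof -
  have "(\<delta> \<longlongrightarrow> \<delta> 0) (at 0 within {0..b})"
    using cont b unfolding continuous_on_def by auto
  then have dl: "(\<delta> \<longlongrightarrow> 0) (at_right 0)" using at_within_Icc_at_right[OF b] d0 by simp
  have "((\<lambda>t. sqrt (64 * (t + \<delta> t ^ 2 / 2))) \<longlongrightarrow> sqrt (64 * (0 + 0 ^ 2 / 2))) (at_right 0)"
    by (intro tendsto_intros dl) auto
  then have up: "((\<lambda>t. sqrt (64 * (t + \<delta> t ^ 2 / 2))) \<longlongrightarrow> 0) (at_right 0)" by simp
  have ev: "eventually (\<lambda>t. t \<in> {0<..<b}) (at_right (0::real))" by (rule eventually_at_right_real[OF b])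
  show ?thesis
  proof (rule tendsto_sandwich[OF _ _ tendsto_const up])
    show "eventually (\<lambda>t. 0 \<le> fS \<delta> t) (at_right 0)"
    proof (rule eventually_mono[OF ev])
      fix t assume t: "t \<in> {0<..<b}"
      then have "\<delta> t \<noteq> 0" using pos[of t] by simp
      then show "0 \<le> fS \<delta> t" using t fS_nonneg[where t=t and \<delta>=\<delta>] by simp
    qed
    show "eventually (\<lambda>t. fS \<delta> t \<le> sqrt (64 * (t + \<delta> t ^ 2 / 2))) (at_right 0)"
    proof (rule eventually_mono[OF ev])
      fix t assume t: "t \<in> {0<..<b}"
      then have "\<delta> t \<noteq> 0" using pos[of t] by simp
      then show "fS \<delta> t \<le> sqrt (64 * (t + \<delta> t ^ 2 / 2))" using t fS_bound[where t=t and \<delta>=\<delta>] by simp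
    qed
  qed
qed

lemma M_int_eq: "M_int b \<delta> e = integral {e..b} (fG \<delta> (dY \<delta> b))"
  unfolding M_int_def fG_def[abs_def] ..

lemma Y_props: assumes "\<delta> \<in> Y b \<beta>"
  shows "continuous_on {0..b} \<delta>" "C1_deriv_on \<delta> b (dY \<delta> b)" "\<And>t. t \<in> {0<..b} \<Longrightarrow> \<delta> t > 0"
    "\<delta> 0 = 0" "\<delta> b = sqrt (2 * \<beta>)" "\<exists>L. (M_int b \<delta> \<longlongrightarrow> L) (at_right 0)"
  using assms Y_C1[OF assms] by (auto simp: Y_def M_defined_def)

lemma M_lower: assumes b: "b > 0" and Y: "\<delta> \<in> Y b \<beta>"
  shows "fS \<delta> b \<le> M b \<delta>"
proof -
  note P = Y_props[OF Y]
  obtain L where L: "(M_int b \<delta> \<longlongrightarrow> L) (at_right 0)" using P(6) by blast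
  have hML: "M b \<delta> = L" unfolding M_def by (rule tendsto_Lim[OF trivial_limit_at_right_real L])
  have g: "((\<lambda>e. fS \<delta> b - fS \<delta> e) \<longlongrightarrow> fS \<delta> b - 0) (at_right 0)"
    by (intro tendsto_intros fS_lim[OF b P(1) P(4)] P(3))
  have ev: "eventually (\<lambda>e. fS \<delta> b - fS \<delta> e \<le> M_int b \<delta> e) (at_right 0)"
  proof (rule eventually_mono[OF eventually_at_right_real[OF b]])
    fix e assume e: "e \<in> {0<..<b}"
    show "fS \<delta> b - fS \<delta> e \<le> M_int b \<delta> e"
      unfolding M_int_eq using main_ineq(3)[OF P(2) P(1) P(3), of e b] e by simp
  qed
  have "fS \<delta> b - 0 \<le> L" by (rule tendsto_le[OF trivial_limit_at_right_real L g ev])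
  then show ?thesis using hML by simp
qed

lemma M_equal_case: assumes b: "b > 0" and Y: "\<delta> \<in> Y b \<beta>" and le: "M b \<delta> \<le> fS \<delta> b"
  and t: "0 < t" "t < b"
  shows "fc' \<delta> (dY \<delta> b) t = 0"
proof -
  note P = Y_props[OF Y]
  define D where "D = dY \<delta> b"
  note MI = main_ineq[OF P(2)[folded D_def] P(1) P(3)]
  obtain L where L: "(M_int b \<delta> \<longlongrightarrow> L) (at_right 0)" using P(6) by blast
  have hML: "M b \<delta> = L" unfolding M_def by (rule tendsto_Lim[OF trivial_limit_at_right_real L])
  define a where "a = t / 2"
  define a' where "a' = (t + b) / 2"
  have aa: "0 < a" "a < t" "t < a'" "a' < b" using t by (auto simp: a_def a'_def)
  define I where "I = integral {a..a'} (fG \<delta> D)"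
  have g: "((\<lambda>e. fS \<delta> a - fS \<delta> e + I + (fS \<delta> b - fS \<delta> a')) \<longlongrightarrow> fS \<delta> a - 0 + I + (fS \<delta> b - fS \<delta> a')) (at_right 0)"
    by (intro tendsto_intros fS_lim[OF b P(1) P(4)] P(3))
  have ev: "eventually (\<lambda>e. fS \<delta> a - fS \<delta> e + I + (fS \<delta> b - fS \<delta> a') \<le> M_int b \<delta> e) (at_right 0)"
  proof (rule eventually_mono[OF eventually_at_right_real[OF aa(1)]])
    fix e assume e: "e \<in> {0<..<a}"
    have i1: "fG \<delta> D integrable_on {e..b}" using MI(2)[of e b] e aa by simp
    have i2: "fG \<delta> D integrable_on {a..b}" using MI(2)[of a b] aa by simp
    have c1: "integral {e..a} (fG \<delta> D) + integral {a..b} (fG \<delta> D) = integral {e..b} (fG \<delta> D)"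
      using Henstock_Kurzweil_Integration.integral_combine[where a=e and c=a and b=b and f="fG \<delta> D"] e aa i1 by simp
    have c2: "integral {a..a'} (fG \<delta> D) + integral {a'..b} (fG \<delta> D) = integral {a..b} (fG \<delta> D)"
      by (rule Henstock_Kurzweil_Integration.integral_combine) (use aa i2 in auto)
    have l1: "fS \<delta> a - fS \<delta> e \<le> integral {e..a} (fG \<delta> D)" using MI(3)[of e a] e aa by simp
    have l2: "fS \<delta> b - fS \<delta> a' \<le> integral {a'..b} (fG \<delta> D)" using MI(3)[of a' b] aa by simp
    show "fS \<delta> a - fS \<delta> e + I + (fS \<delta> b - fS \<delta> a') \<le> M_int b \<delta> e"
      unfolding M_int_eq D_def[symmetric] I_def using c1 c2 l1 l2 by linarith
  qed
  have "fS \<delta> a - 0 + I + (fS \<delta> b - fS \<delta> a') \<le> L" by (rule tendsto_le[OF trivial_limit_at_right_real L g ev])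
  then have Ile: "I \<le> fS \<delta> a' - fS \<delta> a" using le hML by linarith
  have ftc: "(fS' \<delta> D has_integral (fS \<delta> a' - fS \<delta> a)) {a..a'}" using MI(1)[of a a'] aa by simp
  have gi: "(fG \<delta> D has_integral I) {a..a'}"
    unfolding I_def using MI(2)[of a a'] aa by (intro integrable_integral) simp
  have diff: "((\<lambda>x. fG \<delta> D x - fS' \<delta> D x) has_integral (I - (fS \<delta> a' - fS \<delta> a))) {a..a'}"
    by (rule has_integral_diff[OF gi ftc])
  have nn: "\<And>x. x \<in> {a..a'} \<Longrightarrow> 0 \<le> fG \<delta> D x - fS' \<delta> D x"
  proof -
    fix x assume "x \<in> {a..a'}"
    then have "0 < x" "\<delta> x > 0" using aa P(3) by auto
    then show "0 \<le> fG \<delta> D x - fS' \<delta> D x" using fS_core(1)[where t=x and \<delta>=\<delta> and D=D] by simp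
  qed
  have "0 \<le> I - (fS \<delta> a' - fS \<delta> a)" by (rule has_integral_nonneg[OF diff nn])
  then have J0: "I - (fS \<delta> a' - fS \<delta> a) = 0" using Ile by linarith
  have sub: "{a..a'} \<subseteq> {0<..}" using aa by auto
  have pos': "\<And>x. x \<in> {a..a'} \<Longrightarrow> \<delta> x > 0" using aa P(3) by auto
  have cd: "continuous_on {a..a'} \<delta>" by (rule continuous_on_subset[OF P(1)]) (use aa in auto)
  have cD: "continuous_on {a..a'} D"
  proof (rule continuous_on_subset)
    show "continuous_on {0<..b} D" using P(2) unfolding C1_deriv_on_def D_def by simp
    show "{a..a'} \<subseteq> {0<..b}" using aa by auto
  qed
  note fc = f_cont[OF sub pos' cd cD]
  have cdiff: "continuous_on {a..a'} (\<lambda>x. fG \<delta> D x - fS' \<delta> D x)"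
    by (intro continuous_intros fc(4) fc(5))
  have "fG \<delta> D t - fS' \<delta> D t = 0"
  proof (rule has_integral_0_cbox_imp_0[where a=a and b=a' and f="\<lambda>x. fG \<delta> D x - fS' \<delta> D x" and x=t])
    show "continuous_on (cbox a a') (\<lambda>x. fG \<delta> D x - fS' \<delta> D x)" using cdiff by simp
    show "\<And>x. x \<in> box a a' \<Longrightarrow> 0 \<le> fG \<delta> D x - fS' \<delta> D x" using nn by simp
    show "((\<lambda>x. fG \<delta> D x - fS' \<delta> D x) has_integral 0) (cbox a a')" using diff J0 by simp
    show "box a a' \<noteq> {}" using aa by simp
    show "t \<in> cbox a a'" using aa by simp
  qed
  then have "fG \<delta> D t = fS' \<delta> D t" by simp
  then show ?thesis unfolding D_def[symmetric] using fS_core(2)[where t=t and \<delta>=\<delta> and D=D] t P(3) by simp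
qed

lemma fc_const:
  assumes b: "b > 0" and C1: "C1_deriv_on \<delta> b D" and cont: "continuous_on {0..b} \<delta>"
    and pos: "\<And>t. t \<in> {0<..b} \<Longrightarrow> \<delta> t > 0"
    and z: "\<And>t. 0 < t \<Longrightarrow> t < b \<Longrightarrow> fc' \<delta> D t = 0"
    and t: "0 < t" "t \<le> b"
  shows "fc \<delta> t = fc \<delta> b"
proof -
  have sub: "{t..b} \<subseteq> {0<..}" using t by auto
  have pos': "\<And>x. x \<in> {t..b} \<Longrightarrow> \<delta> x > 0" using t pos by auto
  have cd: "continuous_on {t..b} \<delta>" by (rule continuous_on_subset[OF cont]) (use t in auto)
  have cD: "continuous_on {t..b} D"
  proof (rule continuous_on_subset)
    show "continuous_on {0<..b} D" using C1 unfolding C1_deriv_on_def by simp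
    show "{t..b} \<subseteq> {0<..b}" using t by auto
  qed
  note fc = f_cont[OF sub pos' cd cD]
  have "fc \<delta> b = fc \<delta> t"
  proof (rule has_derivative_zero_unique_strong_interval[of "{t, b}" t b "fc \<delta>" "fc \<delta> t" b])
    show "finite {t, b}" by simp
    show "continuous_on {t..b} (fc \<delta>)" by (rule fc(2))
    show "fc \<delta> t = fc \<delta> t" ..
    show "b \<in> {t..b}" using t by simp
    fix x assume x: "x \<in> {t..b} - {t, b}"
    then have x': "0 < x" "x < b" using t by auto
    have "(\<delta> has_real_derivative D x) (at x)" by (rule C1_at[OF C1 x'])
    then have "(fc \<delta> has_real_derivative fc' \<delta> D x) (at x)"
      using x' pos by (intro fS_deriv(2)) auto
    then have "(fc \<delta> has_real_derivative 0) (at x)" using z[OF x'] by simp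
    then have "(fc \<delta> has_derivative (*) 0) (at x)"
      by (simp add: has_field_derivative_def)
    moreover have "((*) (0::real)) = (\<lambda>h. 0)" by (rule ext) simp
    ultimately have "(fc \<delta> has_derivative (\<lambda>h. 0)) (at x)" by simp
    then show "(fc \<delta> has_derivative (\<lambda>h. 0)) (at x within {t..b})"
      by (rule has_derivative_at_withinI)
  qed
  then show ?thesis by simp
qed

lemma X_mono: assumes "0 \<le> a" "a < c" "c \<le> 2*pi" shows "a - sin a < c - sin c"
proof -
  have "(\<lambda>x. x - sin x) a < (\<lambda>x. x - sin x) c"
  proof (rule DERIV_pos_imp_increasing_open[OF assms(2)])
    fix x assume x: "a < x" "x < c"
    then have "1 - cos x > 0" using assms by (intro one_minus_cos_pos) auto
    then show "\<exists>y. ((\<lambda>x. x - sin x) has_real_derivative y) (at x) \<and> y > 0"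
      by (intro exI[of _ "1 - cos x"]) (auto intro!: derivative_eq_intros)
  next
    show "continuous_on {a..c} (\<lambda>x. x - sin x)" by (intro continuous_intros)
  qed
  then show ?thesis by simp
qed

lemma X_le_iff: assumes "0 \<le> a" "a \<le> 2*pi" "0 \<le> c" "c \<le> 2*pi"
  shows "a - sin a \<le> c - sin c \<longleftrightarrow> a \<le> c"
  using X_mono[of a c] X_mono[of c a] assms by (cases a c rule: linorder_cases) auto

lemma X_inj: assumes "0 \<le> a" "a \<le> 2*pi" "0 \<le> c" "c \<le> 2*pi" "a - sin a = c - sin c"
  shows "a = c"
  using X_le_iff[OF assms(1-4)] X_le_iff[OF assms(3,4,1,2)] assms(5) by auto

definition Xinv :: "real \<Rightarrow> real" where
  "Xinv s = (THE \<theta>. \<theta> \<in> {0..2*pi} \<and> \<theta> - sin \<theta> = s)"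

lemma Xinv: assumes "0 \<le> s" "s \<le> 2*pi"
  shows "0 \<le> Xinv s" "Xinv s \<le> 2*pi" "Xinv s - sin (Xinv s) = s"
proof -
  have "\<exists>x. 0 \<le> x \<and> x \<le> 2*pi \<and> (\<lambda>x. x - sin x) x = s"
    by (rule IVT') (use assms in \<open>auto intro!: continuous_intros\<close>)
  then obtain \<theta> where th: "0 \<le> \<theta>" "\<theta> \<le> 2*pi" "\<theta> - sin \<theta> = s" by auto
  have "Xinv s = \<theta>" unfolding Xinv_def
    by (rule the_equality) (use th X_inj in auto)
  then show "0 \<le> Xinv s" "Xinv s \<le> 2*pi" "Xinv s - sin (Xinv s) = s" using th by auto
qed

lemma X_range: assumes "0 \<le> \<theta>" "\<theta> \<le> 2*pi" shows "0 \<le> \<theta> - sin \<theta>" "\<theta> - sin \<theta> \<le> 2*pi"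
  using X_le_iff[of 0 \<theta>] X_le_iff[of \<theta> "2*pi"] assms by auto

lemma Xinv_X: assumes "0 \<le> \<theta>" "\<theta> \<le> 2*pi" shows "Xinv (\<theta> - sin \<theta>) = \<theta>"
  using Xinv[OF X_range[OF assms]] X_inj[of "Xinv (\<theta> - sin \<theta>)" \<theta>] assms by auto

lemma Xinv_cont: "continuous_on {0..2*pi} Xinv"
proof -
  have img: "(\<lambda>x. x - sin x) ` {0..2*pi} = {0..2*pi}"
  proof
    show "(\<lambda>x. x - sin x) ` {0..2*pi} \<subseteq> {0..2*pi}" using X_range by auto
    show "{0..2*pi} \<subseteq> (\<lambda>x. x - sin x) ` {0..2*pi}"
    proof
      fix s assume "s \<in> {0..2*pi}"
      then show "s \<in> (\<lambda>x. x - sin x) ` {0..2*pi}"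
        using Xinv[of s] by (intro image_eqI[of _ _ "Xinv s"]) auto
    qed
  qed
  have "continuous_on ((\<lambda>x. x - sin x) ` {0..2*pi}) Xinv"
    by (rule continuous_on_inv) (auto intro!: continuous_intros Xinv_X)
  then show ?thesis using img by simp
qed

lemma Xinv_open: assumes "0 < s" "s < 2*pi" shows "0 < Xinv s" "Xinv s < 2*pi"
proof -
  note X = Xinv[of s] 
  show "0 < Xinv s"
  proof (rule ccontr)
    assume "\<not> 0 < Xinv s" then have "Xinv s = 0" using X assms by simp
    then show False using X assms by simp
  qed
  show "Xinv s < 2*pi"
  proof (rule ccontr)
    assume "\<not> Xinv s < 2*pi" then have "Xinv s = 2*pi" using X assms by simp
    then show False using X assms by simp
  qed
qed

lemma Xinv_deriv: assumes "0 < s" "s < 2*pi"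
  shows "(Xinv has_real_derivative inverse (1 - cos (Xinv s))) (at s)"
proof (rule DERIV_inverse_function[where f="\<lambda>x. x - sin x" and g=Xinv and a=0 and b="2*pi"])
  show "((\<lambda>x. x - sin x) has_real_derivative 1 - cos (Xinv s)) (at (Xinv s))"
    by (auto intro!: derivative_eq_intros)
  show "1 - cos (Xinv s) \<noteq> 0" using one_minus_cos_pos[OF Xinv_open[OF assms]] by simp
  show "0 < s" "s < 2*pi" using assms by auto
  show "\<And>y. 0 < y \<Longrightarrow> y < 2*pi \<Longrightarrow> Xinv y - sin (Xinv y) = y" using Xinv by auto
  show "isCont Xinv s"
    by (rule continuous_on_interior[OF Xinv_cont]) (use assms in auto)
qed

locale cyc =
  fixes b \<beta> :: real
  assumes b: "b > 0" and bt: "\<beta> > 0"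
begin

abbreviation "th0 \<equiv> theta_t b \<beta>"
abbreviation "k \<equiv> kk b \<beta>"

lemma th0: "0 < th0" "th0 < 2*pi" "alpha th0 = \<beta> / b"
  using Ainv[of "\<beta>/b"] b bt by (auto simp: theta_t_Ainv)

lemma u0: "1 - cos th0 > 0" using one_minus_cos_pos th0 by simp
lemma v0: "th0 - sin th0 > 0" using sin_less_self th0 by simp

lemma k_pos: "k > 0" using u0 bt by (simp add: kk_def)

lemma k_half: "k / 2 = \<beta> / (1 - cos th0)" using u0 unfolding kk_def by (simp add: field_simps)

lemma k_beta: "k / 2 * (1 - cos th0) = \<beta>"
  unfolding k_half using u0 by simp

lemma k_b: "k / 2 * (th0 - sin th0) = b"
proof -
  have "(1 - cos th0) / (th0 - sin th0) = \<beta> / b" using th0(3) by (simp add: alpha_def)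
  then have "(1 - cos th0) * b = \<beta> * (th0 - sin th0)" using v0 b by (simp add: field_simps)
  then show ?thesis using u0 by (simp add: kk_def field_simps)
qed

lemma s_range: assumes "0 \<le> t" "t \<le> b" shows "0 \<le> 2*t/k" "2*t/k \<le> th0 - sin th0" "th0 - sin th0 < 2*pi"
proof -
  show "0 \<le> 2*t/k" using assms k_pos by simp
  have "2*t/k \<le> 2*b/k" using assms k_pos by (simp add: divide_right_mono)
  also have "2*b/k = th0 - sin th0" using k_b k_pos by (simp add: field_simps)
  finally show "2*t/k \<le> th0 - sin th0" .
  show "th0 - sin th0 < 2*pi" using X_mono[of th0 "2*pi"] th0 by simp
qed

definition "g0 t = Xinv (2*t/k)"

lemma g0: assumes "0 \<le> t" "t \<le> b"
  shows "0 \<le> g0 t" "g0 t \<le> th0" "k / 2 * (g0 t - sin (g0 t)) = t"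
proof -
  note s = s_range[OF assms]
  note X = Xinv[of "2*t/k"]
  have X': "0 \<le> g0 t" "g0 t \<le> 2*pi" "g0 t - sin (g0 t) = 2*t/k" using X s by (auto simp: g0_def)
  show "0 \<le> g0 t" using X' by simp
  show "g0 t \<le> th0" using X_le_iff[of "g0 t" th0] X' s th0 by simp
  show "k / 2 * (g0 t - sin (g0 t)) = t" using X' k_pos by simp
qed

lemma gamma0_eq: assumes "0 \<le> t" "t \<le> b"
  shows "gamma0 b \<beta> t = k / 2 * (1 - cos (g0 t))"
proof -
  note G = g0[OF assms]
  have "(THE \<theta>. \<theta> \<in> {0..th0} \<and> k / 2 * (\<theta> - sin \<theta>) = t) = g0 t"
  proof (rule the_equality)
    show "g0 t \<in> {0..th0} \<and> k / 2 * (g0 t - sin (g0 t)) = t" using G by simp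
    fix \<theta> assume h: "\<theta> \<in> {0..th0} \<and> k / 2 * (\<theta> - sin \<theta>) = t"
    then have "k * (\<theta> - sin \<theta>) = k * (g0 t - sin (g0 t))" using G by simp
    then have "\<theta> - sin \<theta> = g0 t - sin (g0 t)" using k_pos by simp
    then show "\<theta> = g0 t" using h G th0 X_inj[of \<theta> "g0 t"] by auto
  qed
  then show ?thesis unfolding gamma0_def Let_def by simp
qed

lemma delta0_eq: assumes "0 \<le> t" "t \<le> b"
  shows "delta0 b \<beta> t = sqrt (k * (1 - cos (g0 t)))"
  using gamma0_eq[OF assms] by (simp add: delta0_def)

end

context cyc begin

lemma s_open: assumes "0 < t" "t \<le> b" shows "0 < 2*t/k" "2*t/k < 2*pi"
  using s_range[of t] assms k_pos by auto

lemma g0_open: assumes "0 < t" "t \<le> b" shows "0 < g0 t" "g0 t < 2*pi"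
  using Xinv_open[OF s_open[OF assms]] by (auto simp: g0_def)

definition "hh t = sqrt (k * (1 - cos (g0 t)))"
definition "D0 t = inverse (sqrt (k * (1 - cos (g0 t)))) / 2 * (k * (sin (g0 t) * (inverse (1 - cos (g0 t)) * (2 / k))))"

lemma hh_deriv: assumes t: "0 < t" "t \<le> b" shows "(hh has_real_derivative D0 t) (at t)"
proof -
  note s = s_open[OF t]
  have d1: "((\<lambda>t. 2*t/k) has_real_derivative 2/k) (at t)"
    by (rule DERIV_cong[OF DERIV_cdivide[OF DERIV_cmult[OF DERIV_ident]]]) simp
  have d2: "(g0 has_real_derivative inverse (1 - cos (g0 t)) * (2/k)) (at t)"
    unfolding g0_def[abs_def] by (rule DERIV_chain2[OF Xinv_deriv[OF s] d1[unfolded g0_def]])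
  have d3: "((\<lambda>t. 1 - cos (g0 t)) has_real_derivative sin (g0 t) * (inverse (1 - cos (g0 t)) * (2/k))) (at t)"
  proof -
    have "((\<lambda>t. 1 - cos (g0 t)) has_real_derivative 0 - (- sin (g0 t) * (inverse (1 - cos (g0 t)) * (2/k)))) (at t)"
      by (rule DERIV_diff[OF DERIV_const DERIV_chain2[OF DERIV_cos d2]])
    then show ?thesis by simp
  qed
  have d4: "((\<lambda>t. k * (1 - cos (g0 t))) has_real_derivative k * (sin (g0 t) * (inverse (1 - cos (g0 t)) * (2/k)))) (at t)"
    by (rule DERIV_cmult[OF d3])
  have wpos: "k * (1 - cos (g0 t)) > 0" using k_pos one_minus_cos_pos[OF g0_open[OF t]] by simp
  show ?thesis unfolding hh_def[abs_def] D0_def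
    by (rule DERIV_chain2[OF DERIV_real_sqrt[OF wpos] d4])
qed

lemma g0_cont: "continuous_on {0..b} g0"
proof -
  have "continuous_on {0..b} (\<lambda>t. Xinv (2*t/k))"
  proof (rule continuous_on_compose2[OF Xinv_cont])
    show "continuous_on {0..b} (\<lambda>t. 2*t/k)" by (intro continuous_intros) (use k_pos in simp)
    show "(\<lambda>t. 2*t/k) ` {0..b} \<subseteq> {0..2*pi}" using s_range by fastforce
  qed
  then show ?thesis unfolding g0_def[abs_def] .
qed

lemma D0_cont: "continuous_on {0<..b} D0"
proof -
  have gc: "continuous_on {0<..b} g0" by (rule continuous_on_subset[OF g0_cont]) auto
  have une: "\<forall>t\<in>{0<..b}. 1 - cos (g0 t) \<noteq> 0"
  proof
    fix t assume "t \<in> {0<..b}"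
    then have "1 - cos (g0 t) > 0" using g0_open one_minus_cos_pos by simp
    then show "1 - cos (g0 t) \<noteq> 0" by simp
  qed
  have wne: "\<forall>t\<in>{0<..b}. sqrt (k * (1 - cos (g0 t))) \<noteq> 0"
  proof
    fix t assume "t \<in> {0<..b}"
    then have "1 - cos (g0 t) > 0" using g0_open one_minus_cos_pos by simp
    then show "sqrt (k * (1 - cos (g0 t))) \<noteq> 0" using k_pos by simp
  qed
  show ?thesis unfolding D0_def[abs_def]
  proof -
    have two: "\<forall>t\<in>{0<..b}. (2::real) \<noteq> 0" by simp
    have kne: "\<forall>t\<in>{0<..b}. k \<noteq> 0" using k_pos by simp
    show "continuous_on {0<..b} (\<lambda>t. inverse (sqrt (k * (1 - cos (g0 t)))) / 2 * (k * (sin (g0 t) * (inverse (1 - cos (g0 t)) * (2 / k)))))"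
      by (intro continuous_intros gc une wne two kne)
  qed
qed

lemma delta0_hh: "t \<in> {0..b} \<Longrightarrow> delta0 b \<beta> t = hh t"
  using delta0_eq by (simp add: hh_def)

lemma delta0_cont: "continuous_on {0..b} (delta0 b \<beta>)"
proof -
  have "continuous_on {0..b} hh" unfolding hh_def[abs_def] by (intro continuous_intros g0_cont)
  moreover have "continuous_on {0..b} (delta0 b \<beta>) = continuous_on {0..b} hh"
    by (rule continuous_on_cong[OF refl delta0_hh])
  ultimately show ?thesis by simp
qed

lemma delta0_C1: "C1_deriv_on (delta0 b \<beta>) b D0"
  unfolding C1_deriv_on_def
proof (intro conjI ballI D0_cont)
  fix t assume t: "t \<in> {0<..b}"
  have t': "0 < t" "t \<le> b" using t by auto
  have d: "(hh has_real_derivative D0 t) (at t within {0<..b})"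
    by (rule has_field_derivative_at_within[OF hh_deriv[OF t']])
  have eq: "\<And>x. x \<in> {0<..b} \<Longrightarrow> dist x t < 1 \<Longrightarrow> hh x = delta0 b \<beta> x"
  proof -
    fix x assume "x \<in> {0<..b}"
    then have "x \<in> {0..b}" by simp
    then show "hh x = delta0 b \<beta> x" using delta0_hh[of x] by simp
  qed
  show "(delta0 b \<beta> has_real_derivative D0 t) (at t within {0<..b})"
    by (rule has_field_derivative_transform_within[OF d zero_less_one t eq])
qed

lemma delta0_pos: assumes "t \<in> {0<..b}" shows "delta0 b \<beta> t > 0"
proof -
  have t: "0 < t" "t \<le> b" using assms by auto
  have "1 - cos (g0 t) > 0" using g0_open[OF t] one_minus_cos_pos by simp
  then have "hh t > 0" using k_pos by (simp add: hh_def)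
  moreover have "delta0 b \<beta> t = hh t" using t by (intro delta0_hh) simp
  ultimately show ?thesis by simp
qed

lemma delta0_0: "delta0 b \<beta> 0 = 0"
proof -
  have "g0 0 = 0" using Xinv_X[of 0] by (simp add: g0_def)
  then show ?thesis using delta0_hh[of 0] b by (simp add: hh_def)
qed

lemma g0_b: "g0 b = th0"
proof -
  have "2*b/k = th0 - sin th0" using k_b k_pos by (simp add: field_simps)
  then show ?thesis using Xinv_X[of th0] th0 by (simp add: g0_def)
qed

lemma delta0_b: "delta0 b \<beta> b = sqrt (2 * \<beta>)"
proof -
  have "k * (1 - cos th0) = 2 * \<beta>" using k_beta by simp
  then show ?thesis using delta0_hh[of b] b g0_b by (simp add: hh_def)
qed

end

context cyc begin

lemma fth_delta0: assumes t: "0 < t" "t \<le> b" shows "fth (delta0 b \<beta>) t = g0 t"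
proof -
  note G = g0_open[OF t]
  have u: "1 - cos (g0 t) > 0" using one_minus_cos_pos G by simp
  have d: "delta0 b \<beta> t = hh t" using t by (intro delta0_hh) simp
  have d2: "(delta0 b \<beta> t)^2 / 2 = k / 2 * (1 - cos (g0 t))"
    using d u k_pos by (simp add: hh_def)
  have tt: "t = k / 2 * (g0 t - sin (g0 t))" using g0[of t] t by simp
  have v: "g0 t - sin (g0 t) > 0" using sin_less_self G by simp
  have "(delta0 b \<beta> t)^2 / 2 / t = alpha (g0 t)"
    unfolding d2 alpha_def using k_pos v by (subst tt) (simp add: field_simps)
  then show ?thesis unfolding fth_def using Ainv_alpha[OF G] by simp
qed

lemma fc_delta0: assumes t: "0 < t" "t \<le> b" shows "fc (delta0 b \<beta>) t = k / 2"
proof -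
  note G = g0_open[OF t]
  have u: "1 - cos (g0 t) > 0" using one_minus_cos_pos G by simp
  have d: "delta0 b \<beta> t = hh t" using t by (intro delta0_hh) simp
  have d2: "(delta0 b \<beta> t)^2 / 2 = k / 2 * (1 - cos (g0 t))"
    using d u k_pos by (simp add: hh_def)
  show ?thesis unfolding fc_def fth_delta0[OF t] d2
    by (rule nonzero_mult_div_cancel_right) (use u in simp)
qed

lemma delta0_ex_C1: "\<exists>D. C1_deriv_on (delta0 b \<beta>) b D" using delta0_C1 by blast

lemma delta0_dY: "C1_deriv_on (delta0 b \<beta>) b (dY (delta0 b \<beta>) b)"
  unfolding dY_def by (rule someI_ex[OF delta0_ex_C1])

lemma delta0_Mint: assumes e: "0 < e" "e < b"
  shows "M_int b (delta0 b \<beta>) e = fS (delta0 b \<beta>) b - fS (delta0 b \<beta>) e"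
proof -
  define D where "D = dY (delta0 b \<beta>) b"
  have C1: "C1_deriv_on (delta0 b \<beta>) b D" using delta0_dY by (simp add: D_def)
  have pos: "\<And>t. t \<in> {0<..b} \<Longrightarrow> delta0 b \<beta> t > 0" by (rule delta0_pos)
  have z: "fc' (delta0 b \<beta>) D t = 0" if t: "0 < t" "t < b" for t
  proof -
    have "(delta0 b \<beta> has_real_derivative D t) (at t)" by (rule C1_at[OF C1 t])
    then have d1: "(fc (delta0 b \<beta>) has_real_derivative fc' (delta0 b \<beta>) D t) (at t)"
      using t pos by (intro fS_deriv(2)) auto
    have d2: "(fc (delta0 b \<beta>) has_real_derivative 0) (at t)"
    proof (rule has_field_derivative_transform_within_open[OF DERIV_const[of "k/2"]])
      show "open {0<..<b}" by simp
      show "t \<in> {0<..<b}" using t by simp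
      fix x assume "x \<in> {0<..<b}"
      then show "k / 2 = fc (delta0 b \<beta>) x" using fc_delta0[of x] by simp
    qed
    show ?thesis using DERIV_unique[OF d1 d2] .
  qed
  have ftc: "(fS' (delta0 b \<beta>) D has_integral (fS (delta0 b \<beta>) b - fS (delta0 b \<beta>) e)) {e..b}"
    using main_ineq(1)[OF C1 delta0_cont pos, of e b] e by simp
  have "(fG (delta0 b \<beta>) D has_integral (fS (delta0 b \<beta>) b - fS (delta0 b \<beta>) e)) {e..b}"
  proof (rule has_integral_spike_finite[OF _ _ ftc, of "{b}"])
    show "finite {b}" by simp
    fix x assume x: "x \<in> {e..b} - {b}"
    then have x': "0 < x" "x < b" using e by auto
    then show "fG (delta0 b \<beta>) D x = fS' (delta0 b \<beta>) D x"
      using fS_core(2)[where t=x and \<delta>="delta0 b \<beta>" and D=D] pos[of x] z[OF x'] by simp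
  qed
  then show ?thesis unfolding M_int_eq D_def[symmetric] by (rule integral_unique)
qed

lemma delta0_lim: "(M_int b (delta0 b \<beta>) \<longlongrightarrow> fS (delta0 b \<beta>) b) (at_right 0)"
proof -
  have "((\<lambda>e. fS (delta0 b \<beta>) b - fS (delta0 b \<beta>) e) \<longlongrightarrow> fS (delta0 b \<beta>) b - 0) (at_right 0)"
    by (intro tendsto_intros fS_lim[OF b delta0_cont delta0_0] delta0_pos)
  then have l: "((\<lambda>e. fS (delta0 b \<beta>) b - fS (delta0 b \<beta>) e) \<longlongrightarrow> fS (delta0 b \<beta>) b) (at_right 0)" by simp
  have ev: "eventually (\<lambda>e. fS (delta0 b \<beta>) b - fS (delta0 b \<beta>) e = M_int b (delta0 b \<beta>) e) (at_right 0)"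
    by (rule eventually_mono[OF eventually_at_right_real[OF b]]) (simp add: delta0_Mint)
  show ?thesis by (rule Lim_transform_eventually[OF l ev])
qed

lemma delta0_in_Y: "delta0 b \<beta> \<in> Y b \<beta>"
  unfolding Y_def M_defined_def
  using delta0_cont delta0_ex_C1 delta0_pos delta0_0 delta0_b delta0_lim by blast

lemma M_delta0: "M b (delta0 b \<beta>) = fS (delta0 b \<beta>) b"
  unfolding M_def by (rule tendsto_Lim[OF trivial_limit_at_right_real delta0_lim])

lemma same_fc: assumes t: "0 < t" "t \<le> b" and d: "\<delta> t > 0" and c: "fc \<delta> t = k / 2"
  shows "\<delta> t = delta0 b \<beta> t"
proof -
  have ne: "\<delta> t \<noteq> 0" using d by simp
  note th = fth_props[where t=t and \<delta>=\<delta>, OF t(1) ne]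
  note R = field_R1[where t=t and \<delta>=\<delta>, OF t(1) ne]
  have "fth \<delta> t - sin (fth \<delta> t) = 2 * t / k" using R(1) c k_pos by (simp add: field_simps)
  then have "fth \<delta> t = g0 t" unfolding g0_def using Xinv_X[of "fth \<delta> t"] th by simp
  then have "\<delta> t ^ 2 = k * (1 - cos (g0 t))" using R(2) c by simp
  then have "\<delta> t = sqrt (k * (1 - cos (g0 t)))" using d by (metis abs_of_pos real_sqrt_abs)
  then show ?thesis using delta0_hh[of t] t by (simp add: hh_def)
qed

theorem main:
  shows "delta0 b \<beta> \<in> Y b \<beta> \<and>
         (\<forall>\<delta>\<in>Y b \<beta>. (\<exists>t\<in>{0..b}. \<delta> t \<noteq> delta0 b \<beta> t) \<longrightarrow> M b (delta0 b \<beta>) < M b \<delta>)"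
proof (intro conjI ballI impI delta0_in_Y)
  fix \<delta> assume Y: "\<delta> \<in> Y b \<beta>" and ex: "\<exists>t\<in>{0..b}. \<delta> t \<noteq> delta0 b \<beta> t"
  note P = Y_props[OF Y]
  have Sb: "fS \<delta> b = fS (delta0 b \<beta>) b"
    using P(5) delta0_b by (simp add: fS_def fc_def fth_def)
  have low: "fS \<delta> b \<le> M b \<delta>" by (rule M_lower[OF b Y])
  show "M b (delta0 b \<beta>) < M b \<delta>"
  proof (rule ccontr)
    assume "\<not> M b (delta0 b \<beta>) < M b \<delta>"
    then have le: "M b \<delta> \<le> fS \<delta> b" using M_delta0 Sb by simp
    have z: "\<And>t. 0 < t \<Longrightarrow> t < b \<Longrightarrow> fc' \<delta> (dY \<delta> b) t = 0"
      using M_equal_case[OF b Y le] by blast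
    have fcb: "fc \<delta> b = k / 2"
    proof -
      have "fc \<delta> b = fc (delta0 b \<beta>) b" using P(5) delta0_b by (simp add: fc_def fth_def)
      then show ?thesis using fc_delta0[of b] b by simp
    qed
    have eq: "\<delta> t = delta0 b \<beta> t" if t: "t \<in> {0..b}" for t
    proof (cases "t = 0")
      case True then show ?thesis using P(4) delta0_0 by simp
    next
      case False
      then have t': "0 < t" "t \<le> b" using t by auto
      have "fc \<delta> t = fc \<delta> b" using fc_const[OF b P(2) P(1) P(3) z t'] .
      moreover have dp: "\<delta> t > 0" using P(3) t' by simp
      ultimately show ?thesis using same_fc[where t=t and \<delta>=\<delta>, OF t' dp] fcb by simp
    qed
    then show False using ex by blast
  qed
qed

end

theorem proposition4:
  fixes b \<beta> :: real
  assumes "b > 0" and "\<beta> > 0"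
  shows "delta0 b \<beta> \<in> Y b \<beta> \<and>
         (\<forall>\<delta>\<in>Y b \<beta>. (\<exists>t\<in>{0..b}. \<delta> t \<noteq> delta0 b \<beta> t) \<longrightarrow> M b (delta0 b \<beta>) < M b \<delta>)"
proof -
  interpret cyc b \<beta> using assms by unfold_locales
  show ?thesis by (rule main)
qed

end
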